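(* Let $X$ be an almost zero-dimensional space and $A\subset X$. If there is a $\sigma$C-set $B$ in $X$ with $\partial A\subset B\subset\overline A$, then $\overline A$ is a C-set in $X$.
   Context: All spaces are separable and metrizable. A subset $A$ of a space $X$ is a C-set in $X$ if $A$ is an intersection of clopen subsets of $X$; a $\sigma$C-set is a countable union of C-sets. $X$ is almost zero-dimensional if every point of $X$ has a neighborhood basis consisting of C-sets in $X$. $\partial A$ denotes the boundary of $A$ in $X$. *)

theory Defs
  imports "HOL-Analysis.Analysis"
begin

text \<open>A C-set in X: an intersection of clopen subsets of X (the empty intersection
  being the whole space).\<close>
definition C_set :: "'a topology \<Rightarrow> 'a set \<Rightarrow> bool" where
  "C_set X A \<longleftrightarrow>
     (\<exists>\<U>. (\<forall>U\<in>\<U>. closedin X U \<and> openin X U) \<and> A = topspace X \<inter> \<Inter>\<U>)"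

definition sigmaC_set :: "'a topology \<Rightarrow> 'a set \<Rightarrow> bool" where
  "sigmaC_set X B \<longleftrightarrow>
     (\<exists>\<C>. countable \<C> \<and> (\<forall>C\<in>\<C>. C_set X C) \<and> B = \<Union>\<C>)"

definition almost_zero_dimensional :: "'a topology \<Rightarrow> bool" where
  "almost_zero_dimensional X \<longleftrightarrow>
     (\<forall>x\<in>topspace X. \<forall>U. openin X U \<and> x \<in> U \<longrightarrow>
        (\<exists>V. C_set X V \<and> x \<in> X interior_of V \<and> V \<subseteq> U))"

end

theory Submission
  imports Defs
begin

lemma sep_metr_second_countable:
  assumes "separable_space X" "metrizable_space X" shows "second_countable X"
proof -
  obtain M d where md: "Metric_space M d" "X = Metric_space.mtopology M d"
    using assms(2) metrizable_space_def by blast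
  interpret Metric_space M d by fact
  obtain C where C: "countable C" "C \<subseteq> M" "mtopology closure_of C = M"
    using assms(1) unfolding separable_space_def md(2) by auto
  define \<B> where "\<B> = (\<lambda>(c,n). mball c (1/real (Suc n))) ` (C \<times> (UNIV::nat set))"
  have cB: "countable \<B>" unfolding \<B>_def using C(1) by simp
  show ?thesis unfolding second_countable_def md(2)
  proof (intro exI[of _ \<B>] conjI ballI allI impI)
    show "countable \<B>" by fact
    fix V assume "V \<in> \<B>" then show "openin mtopology V" by (auto simp: \<B>_def)
  next
    fix U x assume a: "openin mtopology U \<and> x \<in> U"
    then obtain r where r: "r > 0" "mball x r \<subseteq> U" and xM: "x \<in> M"
      using openin_mtopology by blast
    obtain n where n: "inverse (real (Suc n)) < r/2"
      using reals_Archimedean r(1) by (metis half_gt_zero_iff)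
    have "x \<in> mtopology closure_of C" using C(3) xM by simp
    then have allr: "\<forall>r>0. \<exists>y\<in>C. y \<in> mball x r"
      unfolding metric_closure_of by blast
    have pos: "0 < 1/real (Suc n)" by simp
    obtain y where y: "y \<in> C" "y \<in> mball x (1/real (Suc n))"
      using allr pos by blast
    have "x \<in> mball y (1/real (Suc n))" using y xM C(2) by (auto simp: commute)
    moreover have "mball y (1/real (Suc n)) \<subseteq> mball x r"
    proof (rule mball_subset)
      show "d y x + 1 / real (Suc n) \<le> r" using y n xM C(2) by (auto simp: commute field_simps)
      show "x \<in> M" by fact
    qed
    moreover have "mball y (1/real (Suc n)) \<in> \<B>" using y(1) by (auto simp: \<B>_def)
    ultimately show "\<exists>V\<in>\<B>. x \<in> V \<and> V \<subseteq> U" using r(2) by blast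
  qed
qed

lemma C_set_empty: "C_set X {}"
  unfolding C_set_def by (intro exI[of _ "{{}}"]) auto

lemma C_set_sep:
  assumes sc: "second_countable X" and K: "C_set X K" and L: "C_set X L" and KL: "K \<inter> L = {}"
  shows "\<exists>D. openin X D \<and> closedin X D \<and> K \<subseteq> D \<and> D \<inter> L = {}"
proof -
  obtain \<B> where B: "countable \<B>" "\<forall>V\<in>\<B>. openin X V"
    "\<forall>U x. openin X U \<and> x \<in> U \<longrightarrow> (\<exists>V\<in>\<B>. x \<in> V \<and> V \<subseteq> U)"
    using sc unfolding second_countable_def by blast
  obtain \<U>K where UK: "\<forall>U\<in>\<U>K. closedin X U \<and> openin X U" "K = topspace X \<inter> \<Inter>\<U>K"
    using K unfolding C_set_def by blast
  obtain \<U>L where UL: "\<forall>U\<in>\<U>L. closedin X U \<and> openin X U" "L = topspace X \<inter> \<Inter>\<U>L"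
    using L unfolding C_set_def by blast
  define \<G> where "\<G> = {G. openin X G \<and> closedin X G \<and> (G \<inter> K = {} \<or> G \<inter> L = {})}"
  have cov: "\<exists>G\<in>\<G>. x \<in> G" if x: "x \<in> topspace X" for x
  proof (cases "x \<in> K")
    case False
    then obtain U where U: "U \<in> \<U>K" "x \<notin> U" using UK(2) x by blast
    have "topspace X - U \<in> \<G>" using UK(1) U(1) UK(2)
      unfolding \<G>_def by (auto simp: openin_diff closedin_diff)
    then show ?thesis using U x by blast
  next
    case True
    then have "x \<notin> L" using KL by blast
    then obtain U where U: "U \<in> \<U>L" "x \<notin> U" using UL(2) x by blast
    have "topspace X - U \<in> \<G>" using UL(1) U(1) UL(2)
      unfolding \<G>_def by (auto simp: openin_diff closedin_diff)
    then show ?thesis using U x by blast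
  qed
  define f where "f Q = (SOME G. G \<in> \<G> \<and> Q \<subseteq> G)" for Q
  define \<G>' where "\<G>' = f ` {Q\<in>\<B>. \<exists>G\<in>\<G>. Q \<subseteq> G}"
  have cG': "countable \<G>'" unfolding \<G>'_def using B(1) by simp
  have G'G: "\<G>' \<subseteq> \<G>"
  proof
    fix G assume "G \<in> \<G>'"
    then obtain Q where "Q \<in> \<B>" "\<exists>G\<in>\<G>. Q \<subseteq> G" "G = f Q" unfolding \<G>'_def by blast
    then show "G \<in> \<G>" unfolding f_def by (metis (mono_tags, lifting) someI_ex)
  qed
  have cov': "\<exists>G\<in>\<G>'. x \<in> G" if x: "x \<in> topspace X" for x
  proof -
    obtain G where G: "G \<in> \<G>" "x \<in> G" using cov x by blast
    then have "openin X G" unfolding \<G>_def by blast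
    then obtain Q where Q: "Q \<in> \<B>" "x \<in> Q" "Q \<subseteq> G" using B(3) G(2) by blast
    then have ex: "\<exists>G. G \<in> \<G> \<and> Q \<subseteq> G" using G by blast
    have "f Q \<in> \<G> \<and> Q \<subseteq> f Q" unfolding f_def using someI_ex[OF ex] .
    moreover have "f Q \<in> \<G>'" unfolding \<G>'_def using Q G by blast
    ultimately show ?thesis using Q by blast
  qed
  show ?thesis
  proof (cases "topspace X = {}")
    case True
    then show ?thesis using UK(2) by (intro exI[of _ "{}"]) auto
  next
    case False
    then have ne: "\<G>' \<noteq> {}" using cov' by blast
    define g where "g = from_nat_into \<G>'"
    have rg: "range g = \<G>'" unfolding g_def using ne cG' by simp
    have gG: "g n \<in> \<G>" for n using rg G'G by blast
    have gop: "openin X (g n)" and gcl: "closedin X (g n)" for n using gG[of n] unfolding \<G>_def by auto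
    define H where "H n = g n - \<Union>(g ` {..<n})" for n
    have Hop: "openin X (H n)" for n
      unfolding H_def by (intro openin_diff gop closedin_Union) (auto simp: gcl)
    have Hsub: "H n \<subseteq> g n" for n unfolding H_def by blast
    have Hcov: "\<exists>n. x \<in> H n" if xt: "x \<in> topspace X" for x
    proof -
      obtain G where "G \<in> \<G>'" "x \<in> G" using cov' xt by blast
      then obtain n where n: "x \<in> g n" using rg by blast
      define m where "m = (LEAST n. x \<in> g n)"
      have "x \<in> g m" unfolding m_def using n by (rule LeastI)
      moreover have "\<forall>k<m. x \<notin> g k" unfolding m_def using not_less_Least by blast
      ultimately show ?thesis unfolding H_def by blast
    qed
    have Hdisj: "n = m" if "x \<in> H n" "x \<in> H m" for x n m
    proof (rule ccontr)
      assume "n \<noteq> m"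
      then consider "n < m" | "m < n" by linarith
      then show False using that unfolding H_def by cases auto
    qed
    define D where "D = (\<Union>n\<in>{n. g n \<inter> L = {}}. H n)"
    define E where "E = (\<Union>n\<in>{n. g n \<inter> L \<noteq> {}}. H n)"
    have Dop: "openin X D" unfolding D_def using Hop by blast
    have Eop: "openin X E" unfolding E_def using Hop by blast
    have Hts: "H n \<subseteq> topspace X" for n using Hop openin_subset by blast
    have "topspace X - D = E"
    proof
      show "topspace X - D \<subseteq> E"
      proof
        fix x assume "x \<in> topspace X - D"
        then obtain n where "x \<in> H n" "x \<notin> D" using Hcov by blast
        then show "x \<in> E" unfolding D_def E_def by blast
      qed
      show "E \<subseteq> topspace X - D"
        unfolding D_def E_def using Hts Hdisj by blast
    qed
    then have Dcl: "closedin X D" unfolding closedin_def using Eop Hts D_def by auto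
    have "K \<subseteq> D"
    proof
      fix x assume xK: "x \<in> K"
      then have "x \<in> topspace X" using UK(2) by blast
      then obtain n where n: "x \<in> H n" using Hcov by blast
      then have "g n \<inter> K \<noteq> {}" using Hsub xK by blast
      then have "g n \<inter> L = {}" using gG[of n] unfolding \<G>_def by blast
      then show "x \<in> D" unfolding D_def using n by blast
    qed
    moreover have "D \<inter> L = {}" unfolding D_def using Hsub by blast
    ultimately show ?thesis using Dop Dcl by blast
  qed
qed

theorem theorem4p3:
  fixes X :: "'a topology" and A B :: "'a set"
  assumes "separable_space X" and "metrizable_space X"
    and "almost_zero_dimensional X"
    and "A \<subseteq> topspace X"
    and "sigmaC_set X B"
    and "X frontier_of A \<subseteq> B" and "B \<subseteq> X closure_of A"
  shows "C_set X (X closure_of A)"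
proof -
  define F where "F = X closure_of A"
  have sc: "second_countable X" using assms(1,2) by (rule sep_metr_second_countable)
  obtain \<B> where Bb: "countable \<B>" "\<forall>V\<in>\<B>. openin X V"
    "\<forall>U x. openin X U \<and> x \<in> U \<longrightarrow> (\<exists>V\<in>\<B>. x \<in> V \<and> V \<subseteq> U)"
    using sc unfolding second_countable_def by blast
  have Fcl: "closedin X F" unfolding F_def by simp
  have Fts: "F \<subseteq> topspace X" unfolding F_def by (rule closure_of_subset_topspace)
  have Uop: "openin X (topspace X - F)" using Fcl by (simp add: closedin_def)
  have intF: "X interior_of A \<subseteq> F"
    unfolding F_def using interior_of_subset[of X A] closure_of_subset[OF assms(4)] by (rule order_trans)
  obtain \<C> where Cc: "countable \<C>" "\<forall>C\<in>\<C>. C_set X C" "B = \<Union>\<C>"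
    using assms(5) unfolding sigmaC_set_def by blast
  define \<C>' where "\<C>' = insert {} \<C>"
  define b where "b = from_nat_into \<C>'"
  have rb: "range b = \<C>'" unfolding b_def \<C>'_def using Cc(1) by simp
  have bin: "b m \<in> insert {} \<C>" for m using rb unfolding \<C>'_def by (metis rangeI)
  have bC: "C_set X (b m)" for m
    using bin[of m] Cc(2) C_set_empty by (cases "b m = {}") auto
  have bB: "b m \<subseteq> B" for m
    using bin[of m] Cc(3) by (cases "b m = {}") auto
  have bF: "b m \<subseteq> F" for m using bB[of m] assms(7) unfolding F_def by (rule order_trans)
  have Bb_sub: "B \<subseteq> (\<Union>m. b m)"
  proof
    fix z assume "z \<in> B"
    then obtain C where C: "C \<in> \<C>" "z \<in> C" using Cc(3) by blast
    then have "C \<in> range b" using rb unfolding \<C>'_def by blast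
    then show "z \<in> (\<Union>m. b m)" using C by blast
  qed
  have key: "\<exists>W. openin X W \<and> closedin X W \<and> F \<subseteq> W \<and> x \<notin> W"
    if x: "x \<in> topspace X" "x \<notin> F" for x
  proof -
    obtain V0 where V0: "C_set X V0" "x \<in> X interior_of V0" "V0 \<subseteq> topspace X - F"
      using assms(3) x Uop unfolding almost_zero_dimensional_def by blast
    define P where "P Q \<longleftrightarrow> (\<exists>V. C_set X V \<and> Q \<subseteq> X interior_of V \<and> V \<subseteq> topspace X - F)" for Q
    define fV where "fV Q = (SOME V. C_set X V \<and> Q \<subseteq> X interior_of V \<and> V \<subseteq> topspace X - F)" for Q
    define \<V> where "\<V> = insert V0 (fV ` {Q\<in>\<B>. P Q})"
    have cV: "countable \<V>" unfolding \<V>_def using Bb(1) by simp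
    have fVp: "C_set X (fV Q) \<and> Q \<subseteq> X interior_of (fV Q) \<and> fV Q \<subseteq> topspace X - F" if "P Q" for Q
      using that unfolding P_def fV_def by (rule someI_ex)
    define w where "w = from_nat_into \<V>"
    have rw: "range w = \<V>" unfolding w_def using cV by (simp add: \<V>_def)
    define v where "v = case_nat V0 w"
    have vC: "C_set X (v k) \<and> v k \<subseteq> topspace X - F" for k
    proof (cases k)
      case 0 then show ?thesis using V0 unfolding v_def by simp
    next
      case (Suc n)
      have "w n \<in> \<V>" using rw by blast
      then consider "w n = V0" | Q where "P Q" "w n = fV Q" unfolding \<V>_def by blast
      then have "C_set X (w n) \<and> w n \<subseteq> topspace X - F"
      proof cases
        case 1 then show ?thesis using V0 by simp
      next
        case (2 Q) then show ?thesis using fVp[of Q] by simp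
      qed
      then show ?thesis using Suc unfolding v_def by simp
    qed
    have xv0: "x \<in> v 0" using V0(2) interior_of_subset unfolding v_def by force
    have vcov: "\<exists>k. z \<in> X interior_of (v k)" if z: "z \<in> topspace X - F" for z
    proof -
      obtain Vz where Vz: "C_set X Vz" "z \<in> X interior_of Vz" "Vz \<subseteq> topspace X - F"
        using assms(3) z Uop unfolding almost_zero_dimensional_def by blast
      obtain Q where Q: "Q \<in> \<B>" "z \<in> Q" "Q \<subseteq> X interior_of Vz"
        using Bb(3) Vz(2) openin_interior_of by blast
      have PQ: "P Q" unfolding P_def using Vz Q by blast
      then have "fV Q \<in> \<V>" unfolding \<V>_def using Q by blast
      then obtain n where "w n = fV Q" using rw by (metis rangeE)
      then have vn: "v (Suc n) = fV Q" unfolding v_def by simp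
      have "Q \<subseteq> X interior_of (fV Q)" using fVp[OF PQ] by simp
      then have "z \<in> X interior_of (v (Suc n))" using Q(2) vn by auto
      then show ?thesis by (rule exI)
    qed
    have "\<forall>m k. \<exists>D. openin X D \<and> closedin X D \<and> b m \<subseteq> D \<and> D \<inter> v k = {}"
    proof (intro allI)
      fix m k
      have "b m \<inter> v k = {}" using bF[of m] vC[of k] by blast
      then show "\<exists>D. openin X D \<and> closedin X D \<and> b m \<subseteq> D \<and> D \<inter> v k = {}"
        using C_set_sep[OF sc bC[of m]] vC[of k] by blast
    qed
    then obtain Dp where Dp: "\<And>m k. openin X (Dp m k) \<and> closedin X (Dp m k) \<and> b m \<subseteq> Dp m k \<and> Dp m k \<inter> v k = {}"
      by metis
    define D where "D m = \<Inter>(Dp m ` {..m})" for m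
    have Dop: "openin X (D m)" for m
      unfolding D_def by (rule openin_Inter) (use Dp in auto)
    have Dcl: "closedin X (D m)" for m
      unfolding D_def by (rule closedin_Inter) (use Dp in auto)
    have bD: "b m \<subseteq> D m" for m unfolding D_def using Dp by blast
    have Dv: "D m \<inter> v k = {}" if "k \<le> m" for m k
      unfolding D_def using Dp that by blast
    define W where "W = X interior_of A \<union> (\<Union>m. D m)"
    have Wop: "openin X W" unfolding W_def
      by (intro openin_Un openin_interior_of openin_Union) (auto simp: Dop)
    have FW: "F \<subseteq> W"
    proof
      fix z assume zF: "z \<in> F"
      show "z \<in> W"
      proof (cases "z \<in> X interior_of A")
        case True then show ?thesis unfolding W_def by blast
      next
        case False
        then have "z \<in> X frontier_of A" using zF unfolding F_def frontier_of_def by blast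
        then have "z \<in> (\<Union>m. b m)" using assms(6) Bb_sub by blast
        then show ?thesis unfolding W_def using bD by blast
      qed
    qed
    have xW: "x \<notin> W"
    proof
      assume "x \<in> W"
      then consider "x \<in> X interior_of A" | m where "x \<in> D m" unfolding W_def by blast
      then show False
      proof cases
        case 1 then show False using intF x by blast
      next
        case (2 m) then show False using Dv[of 0 m] xv0 by blast
      qed
    qed
    have Wts: "W \<subseteq> topspace X" using Wop by (rule openin_subset)
    have "openin X (topspace X - W)"
    proof (subst openin_subopen, intro ballI)
      fix z assume z: "z \<in> topspace X - W"
      then have "z \<in> topspace X - F" using FW by blast
      then obtain k where k: "z \<in> X interior_of (v k)" using vcov by blast
      define T where "T = X interior_of (v k) - \<Union>(D ` {..<k})"
      have Top: "openin X T" unfolding T_def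
        by (intro openin_diff openin_interior_of closedin_Union) (auto simp: Dcl)
      have zD: "z \<notin> D m" for m using z unfolding W_def by auto
      have zT: "z \<in> T" using k zD unfolding T_def by auto
      have TW: "T \<subseteq> topspace X - W"
      proof
        fix t assume t: "t \<in> T"
        then have tv: "t \<in> v k" unfolding T_def using interior_of_subset[of X "v k"] by auto
        then have tF: "t \<in> topspace X - F" using vC[of k] by blast
        have "t \<notin> D m" for m
        proof (cases "m < k")
          case True then show ?thesis using t unfolding T_def by blast
        next
          case False then show ?thesis using Dv[of k m] tv by auto
        qed
        moreover have "t \<notin> X interior_of A" using tF intF by auto
        ultimately show "t \<in> topspace X - W" using tF unfolding W_def by auto
      qed
      show "\<exists>T. openin X T \<and> z \<in> T \<and> T \<subseteq> topspace X - W" using Top zT TW by blast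
    qed
    then have "closedin X W" using Wts by (simp add: closedin_def)
    then show ?thesis using Wop FW xW by blast
  qed
  have "F = topspace X \<inter> \<Inter>{W. closedin X W \<and> openin X W \<and> F \<subseteq> W}"
  proof
    show "F \<subseteq> topspace X \<inter> \<Inter>{W. closedin X W \<and> openin X W \<and> F \<subseteq> W}" using Fts by blast
    show "topspace X \<inter> \<Inter>{W. closedin X W \<and> openin X W \<and> F \<subseteq> W} \<subseteq> F"
    proof
      fix x assume x: "x \<in> topspace X \<inter> \<Inter>{W. closedin X W \<and> openin X W \<and> F \<subseteq> W}"
      show "x \<in> F"
      proof (rule ccontr)
        assume "x \<notin> F"
        then obtain W where "openin X W" "closedin X W" "F \<subseteq> W" "x \<notin> W" using key x by blast
        then show False using x by blast
      qed
    qed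
  qed
  note eq = this
  show ?thesis unfolding C_set_def F_def[symmetric]
  proof (rule exI[of _ "{W. closedin X W \<and> openin X W \<and> F \<subseteq> W}"], rule conjI)
    show "\<forall>U\<in>{W. closedin X W \<and> openin X W \<and> F \<subseteq> W}. closedin X U \<and> openin X U" by blast
    show "F = topspace X \<inter> \<Inter>{W. closedin X W \<and> openin X W \<and> F \<subseteq> W}" by (rule eq)
  qed
qed

end
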